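(* Let $t,t':V\to\mathbb{R}_{\ge0}$ be fingerprints with $t_v\le t'_v$ for all $v\in V$. If two vertices $u,v$ are actively connected in shadow moat growing on $(G,t)$, then they are actively connected in shadow moat growing on $(G,t')$.
   Context: $G=(V,E,c)$ is an undirected graph with edge costs $c:E\to\mathbb{R}_{\ge0}$; $\delta(S)$ denotes the edges with exactly one endpoint in $S$. Shadow moat growing on $(G,t)$: a continuous process in time $\tau\ge0$ maintaining a forest $F$ (initially empty), the components of $(V,F)$, and values $y_S\ge0$ (initially $0$). At time $\tau$ a component $C$ is active iff it contains $w$ with $t_w>\tau$; each active component $C$ increases $y_C$ at rate $1$. When an edge $e$ between different components satisfies $\sum_{S:e\in\delta(S)}y_S=c_e$ it is added to $F$ and the components merge (ties processed one at a time by a fixed rule). The process stops when no component is active. Vertices $u,v$ are actively connected in a run if there is a time $\tau$ such that $u$ and $v$ lie in a common component at time $\tau$ and, for every $\tau'\in[0,\tau)$, the components containing $u$ and containing $v$ at time $\tau'$ are both active (i.e., both remain in active components from the start until they become connected). *)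

theory Defs
  imports Complex_Main
begin

text \<open>Edges are 2-element subsets of V; e is in delta(S) iff exactly one endpoint of e lies in S.
The continuous process is simulated event by event: between consecutive events the set of
components and their activity status are constant, so the y-values grow linearly.
At each event time all edges that have become tight are added (the resulting partition into
components does not depend on the order in which ties are processed).\<close>

definition active :: "('a \<Rightarrow> real) \<Rightarrow> real \<Rightarrow> 'a set \<Rightarrow> bool" where
  "active t \<tau> C \<longleftrightarrow> (\<exists>w\<in>C. \<tau> < t w)"

definition crosses :: "'a set \<Rightarrow> 'a set \<Rightarrow> bool" where
  "crosses e S \<longleftrightarrow> card (e \<inter> S) = 1"

text \<open>Sum of y_S over all S with e in delta(S) (y is supported on subsets of V).\<close>
definition load :: "'a set \<Rightarrow> ('a set \<Rightarrow> real) \<Rightarrow> 'a set \<Rightarrow> real" where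
  "load V y e = (\<Sum>S\<in>Pow V. if crosses e S then y S else 0)"

definition merge_tight ::
  "'a set \<Rightarrow> 'a set set \<Rightarrow> ('a set \<Rightarrow> real) \<Rightarrow> ('a set \<Rightarrow> real) \<Rightarrow> 'a set set \<Rightarrow> 'a set set" where
  "merge_tight V E c y P =
     (let R = {(a, b). \<exists>C\<in>P. a \<in> C \<and> b \<in> C} \<union> {(a, b). {a, b} \<in> E \<and> load V y {a, b} = c {a, b}}
      in {{w \<in> V. (a, w) \<in> R\<^sup>*} | a. a \<in> V})"

text \<open>Number of active components crossing e (rate at which the load of e grows).\<close>
definition active_rate :: "('a \<Rightarrow> real) \<Rightarrow> real \<Rightarrow> 'a set set \<Rightarrow> 'a set \<Rightarrow> nat" where
  "active_rate t \<tau> P e = card {C \<in> P. active t \<tau> C \<and> crosses e C}"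

text \<open>Candidate times of the next event: an edge between different components becomes
tight, or an active component becomes inactive.\<close>
definition event_times ::
  "'a set \<Rightarrow> 'a set set \<Rightarrow> ('a set \<Rightarrow> real) \<Rightarrow> ('a \<Rightarrow> real) \<Rightarrow> real \<Rightarrow> 'a set set \<Rightarrow> ('a set \<Rightarrow> real) \<Rightarrow> real set" where
  "event_times V E c t \<tau> P y =
     {\<tau> + (c e - load V y e) / real (active_rate t \<tau> P e) | e.
        e \<in> E \<and> \<not> (\<exists>C\<in>P. e \<subseteq> C) \<and> 0 < active_rate t \<tau> P e}
     \<union> {Max (t ` C) | C. C \<in> P \<and> active t \<tau> C}"

type_synonym 'a smg_state = "real \<times> 'a set set \<times> ('a set \<Rightarrow> real)"

definition smg_step ::
  "'a set \<Rightarrow> 'a set set \<Rightarrow> ('a set \<Rightarrow> real) \<Rightarrow> ('a \<Rightarrow> real) \<Rightarrow> 'a smg_state \<Rightarrow> 'a smg_state" where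
  "smg_step V E c t st =
     (case st of (\<tau>, P, y) \<Rightarrow>
        if \<not> (\<exists>C\<in>P. active t \<tau> C) then (\<tau>, P, y)
        else (let \<tau>' = Min (event_times V E c t \<tau> P y);
                  y' = (\<lambda>S. if S \<in> P \<and> active t \<tau> S then y S + (\<tau>' - \<tau>) else y S)
              in (\<tau>', merge_tight V E c y' P, y')))"

definition smg_init :: "'a set \<Rightarrow> 'a set set \<Rightarrow> ('a set \<Rightarrow> real) \<Rightarrow> 'a smg_state" where
  "smg_init V E c = (0, merge_tight V E c (\<lambda>_. 0) {{v} | v. v \<in> V}, (\<lambda>_. 0))"

definition smg_state ::
  "'a set \<Rightarrow> 'a set set \<Rightarrow> ('a set \<Rightarrow> real) \<Rightarrow> ('a \<Rightarrow> real) \<Rightarrow> nat \<Rightarrow> 'a smg_state" where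
  "smg_state V E c t k = (smg_step V E c t ^^ k) (smg_init V E c)"

text \<open>The component containing u at time tau (after processing the events at time tau).
Partitions only get coarser, so this is the component in the latest state reached by time tau.\<close>
definition smg_comp ::
  "'a set \<Rightarrow> 'a set set \<Rightarrow> ('a set \<Rightarrow> real) \<Rightarrow> ('a \<Rightarrow> real) \<Rightarrow> real \<Rightarrow> 'a \<Rightarrow> 'a set" where
  "smg_comp V E c t \<tau> u =
     {w. \<exists>k. fst (smg_state V E c t k) \<le> \<tau> \<and>
            (\<exists>C\<in>fst (snd (smg_state V E c t k)). u \<in> C \<and> w \<in> C)}"

definition actively_connected ::
  "'a set \<Rightarrow> 'a set set \<Rightarrow> ('a set \<Rightarrow> real) \<Rightarrow> ('a \<Rightarrow> real) \<Rightarrow> 'a \<Rightarrow> 'a \<Rightarrow> bool" where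
  "actively_connected V E c t u v \<longleftrightarrow>
     (\<exists>\<tau>\<ge>0. v \<in> smg_comp V E c t \<tau> u \<and>
        (\<forall>\<tau>'. 0 \<le> \<tau>' \<and> \<tau>' < \<tau> \<longrightarrow>
            active t \<tau>' (smg_comp V E c t \<tau>' u) \<and> active t \<tau>' (smg_comp V E c t \<tau>' v)))"

end

theory Submission
  imports Defs "HOL-Analysis.Analysis"
begin


definition part :: "'a set \<Rightarrow> 'a set set \<Rightarrow> bool" where
  "part V P \<longleftrightarrow> (\<forall>C\<in>P. C \<subseteq> V \<and> C \<noteq> {}) \<and> (\<forall>a\<in>V. \<exists>C\<in>P. a \<in> C)
      \<and> (\<forall>C\<in>P. \<forall>D\<in>P. C \<inter> D \<noteq> {} \<longrightarrow> C = D)"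

definition MR where
  "MR V E c y P = {(a, b). \<exists>C\<in>P. a \<in> C \<and> b \<in> C} \<union> {(a, b). {a, b} \<in> E \<and> load V y {a, b} = c {a, b}}"

lemma mt_eq: "merge_tight V E c y P = {{w \<in> V. (a, w) \<in> (MR V E c y P)\<^sup>*} | a. a \<in> V}"
  by (simp add: merge_tight_def MR_def Let_def)

lemma sym_MR: "sym (MR V E c y P)"
  unfolding sym_def MR_def by (auto simp: insert_commute)

lemma cls_part:
  assumes "sym R"
  shows "part V {{w \<in> V. (a, w) \<in> R\<^sup>*} | a. a \<in> V}"
proof -
  have s: "(a, b) \<in> R\<^sup>* \<Longrightarrow> (b, a) \<in> R\<^sup>*" for a b
    using sym_rtrancl[OF assms] by (auto simp: sym_def)
  have d: "{w \<in> V. (a, w) \<in> R\<^sup>*} = {w \<in> V. (b, w) \<in> R\<^sup>*}"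
    if h: "(a, x) \<in> R\<^sup>*" "(b, x) \<in> R\<^sup>*" for a b x
  proof -
    have xa: "(x, a) \<in> R\<^sup>*" "(x, b) \<in> R\<^sup>*" using h s by blast+
    have "(b, w) \<in> R\<^sup>*" if "(a, w) \<in> R\<^sup>*" for w
      using rtrancl_trans[OF rtrancl_trans[OF h(2) xa(1)] that] .
    moreover have "(a, w) \<in> R\<^sup>*" if "(b, w) \<in> R\<^sup>*" for w
      using rtrancl_trans[OF rtrancl_trans[OF h(1) xa(2)] that] .
    ultimately show ?thesis by blast
  qed
  show ?thesis unfolding part_def
    by (auto dest: d)
qed

lemma mt_part: "part V (merge_tight V E c y P)"
  unfolding mt_eq by (rule cls_part[OF sym_MR])

lemma part_unique: "part V P \<Longrightarrow> C \<in> P \<Longrightarrow> D \<in> P \<Longrightarrow> x \<in> C \<Longrightarrow> x \<in> D \<Longrightarrow> C = D"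
  unfolding part_def by blast

lemma mt_mem: "a \<in> V \<Longrightarrow> {w \<in> V. (a, w) \<in> (MR V E c y P)\<^sup>*} \<in> merge_tight V E c y P"
  unfolding mt_eq by (intro CollectI exI[of _ a] conjI refl)

lemma mt_coarse:
  assumes "part V P" "C \<in> P"
  shows "\<exists>D\<in>merge_tight V E c y P. C \<subseteq> D"
proof -
  obtain a where a: "a \<in> C" using assms unfolding part_def by blast
  have aV: "a \<in> V" using assms a unfolding part_def by blast
  have "C \<subseteq> {w \<in> V. (a, w) \<in> (MR V E c y P)\<^sup>*}"
  proof
    fix w assume w: "w \<in> C"
    then have "w \<in> V" using assms unfolding part_def by blast
    moreover have "(a, w) \<in> MR V E c y P" using a w assms(2) unfolding MR_def by blast
    ultimately show "w \<in> {w \<in> V. (a, w) \<in> (MR V E c y P)\<^sup>*}" by blast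
  qed
  then show ?thesis using mt_mem[OF aV] by blast
qed

lemma mt_pair:
  assumes "(a, b) \<in> MR V E c y P" "a \<in> V" "b \<in> V"
  shows "\<exists>D\<in>merge_tight V E c y P. a \<in> D \<and> b \<in> D"
proof -
  have r: "(a, b) \<in> (MR V E c y P)\<^sup>*" using assms(1) by (rule r_into_rtrancl)
  have "a \<in> {w \<in> V. (a, w) \<in> (MR V E c y P)\<^sup>*}" by (rule CollectI, rule conjI[OF assms(2) rtrancl_refl])
  moreover have "b \<in> {w \<in> V. (a, w) \<in> (MR V E c y P)\<^sup>*}" by (rule CollectI, rule conjI[OF assms(3) r])
  ultimately show ?thesis by (intro bexI[OF _ mt_mem[OF assms(2)]] conjI)
qed

locale smg =
  fixes V :: "'a set" and E :: "'a set set" and c :: "'a set \<Rightarrow> real" and t :: "'a \<Rightarrow> real"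
  assumes finV: "finite V"
    and Eok: "\<forall>e\<in>E. \<exists>a b. a \<in> V \<and> b \<in> V \<and> a \<noteq> b \<and> e = {a, b}"
    and cpos: "\<forall>e\<in>E. 0 \<le> c e"
begin

definition "tau k = fst (smg_state V E c t k)"
definition "PP k = fst (snd (smg_state V E c t k))"
definition "Y k = snd (snd (smg_state V E c t k))"
definition "nt k \<longleftrightarrow> (\<exists>C\<in>PP k. active t (tau k) C)"
definition "ET k = event_times V E c t (tau k) (PP k) (Y k)"

lemma st_Suc: "smg_state V E c t (Suc k) = smg_step V E c t (smg_state V E c t k)"
  by (simp add: smg_state_def)

lemma st_triv:
  assumes "\<not> nt k" shows "smg_state V E c t (Suc k) = smg_state V E c t k"
proof -
  obtain a P y where s: "smg_state V E c t k = (a, P, y)" by (cases "smg_state V E c t k" rule: prod_cases3) blast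
  have "\<not> (\<exists>C\<in>P. active t a C)" using assms s unfolding nt_def tau_def PP_def by simp
  then show ?thesis unfolding st_Suc s smg_step_def by simp
qed

lemma triv_eq:
  assumes "\<not> nt k" shows "tau (Suc k) = tau k" "PP (Suc k) = PP k" "Y (Suc k) = Y k"
  using st_triv[OF assms] unfolding tau_def PP_def Y_def by simp_all

lemma st_nt:
  assumes "nt k"
  shows "tau (Suc k) = Min (ET k)"
    and "Y (Suc k) = (\<lambda>S. if S \<in> PP k \<and> active t (tau k) S then Y k S + (Min (ET k) - tau k) else Y k S)"
    and "PP (Suc k) = merge_tight V E c (Y (Suc k)) (PP k)"
proof -
  obtain a P y where s: "smg_state V E c t k = (a, P, y)" by (cases "smg_state V E c t k" rule: prod_cases3) blast
  have a: "tau k = a" "PP k = P" "Y k = y" "ET k = event_times V E c t a P y"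
    unfolding tau_def PP_def Y_def ET_def s by simp_all
  have nn: "\<not> \<not> (\<exists>C\<in>P. active t a C)" using assms a unfolding nt_def by simp
  have e: "smg_state V E c t (Suc k) = (Min (ET k), merge_tight V E c (\<lambda>S. if S \<in> P \<and> active t a S then y S + (Min (ET k) - a) else y S) P,
       (\<lambda>S. if S \<in> P \<and> active t a S then y S + (Min (ET k) - a) else y S))"
    unfolding st_Suc s smg_step_def a(4) Let_def prod.case if_not_P[OF nn] by (rule refl)
  show "tau (Suc k) = Min (ET k)" unfolding tau_def e by simp
  show "Y (Suc k) = (\<lambda>S. if S \<in> PP k \<and> active t (tau k) S then Y k S + (Min (ET k) - tau k) else Y k S)"
    unfolding Y_def e a(1-3)[symmetric] by simp
  show "PP (Suc k) = merge_tight V E c (Y (Suc k)) (PP k)"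
    unfolding Y_def PP_def e a(1-3)[symmetric] by simp
qed

lemma tau0: "tau 0 = 0" and PP0: "PP 0 = merge_tight V E c (\<lambda>_. 0) {{v} | v. v \<in> V}"
  and Y0: "Y 0 = (\<lambda>_. 0)"
  by (simp_all add: tau_def PP_def Y_def smg_state_def smg_init_def)

lemma part_PP: "part V (PP k)"
proof (induction k)
  case 0 then show ?case by (simp add: PP0 mt_part)
next
  case (Suc k) then show ?case
    by (cases "nt k") (simp_all add: st_nt triv_eq mt_part)
qed

lemma finE: "finite E"
proof -
  have "E \<subseteq> Pow V" using Eok by auto
  then show ?thesis using finV finite_subset by auto
qed

lemma finP: "finite (PP k)"
proof -
  have "PP k \<subseteq> Pow V" using part_PP[of k] unfolding part_def by auto
  then show ?thesis using finV finite_subset by auto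
qed

lemma load_step:
  assumes "nt k"
  shows "load V (Y (Suc k)) e = load V (Y k) e + (tau (Suc k) - tau k) * real (active_rate t (tau k) (PP k) e)"
proof -
  define A where "A = {C \<in> PP k. active t (tau k) C \<and> crosses e C}"
  define d where "d = tau (Suc k) - tau k"
  have AP: "A \<subseteq> Pow V" using part_PP[of k] unfolding A_def part_def by auto
  have eq: "(if crosses e S then Y (Suc k) S else 0) = (if crosses e S then Y k S else 0) + (if S \<in> A then d else 0)" for S
    using st_nt[OF assms] unfolding A_def d_def by auto
  have "load V (Y (Suc k)) e = (\<Sum>S\<in>Pow V. (if crosses e S then Y k S else 0) + (if S \<in> A then d else 0))"
    unfolding load_def using eq by simp
  also have "\<dots> = load V (Y k) e + (\<Sum>S\<in>Pow V. if S \<in> A then d else 0)"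
    unfolding load_def by (simp add: sum.distrib)
  also have "(\<Sum>S\<in>Pow V. if S \<in> A then d else 0) = (\<Sum>S\<in>Pow V \<inter> A. d)"
    using sum.inter_restrict[of "Pow V" "\<lambda>_. d" A] finV by (simp only: finite_Pow_iff)
  also have "Pow V \<inter> A = A" using AP by auto
  finally show ?thesis unfolding d_def A_def active_rate_def by simp
qed

end


context smg
begin

lemma PP_sub: "C \<in> PP k \<Longrightarrow> C \<subseteq> V"
  using part_PP[of k] unfolding part_def by blast

lemma PP_ne: "C \<in> PP k \<Longrightarrow> C \<noteq> {}"
  using part_PP[of k] unfolding part_def by blast

lemma PP_cov: "a \<in> V \<Longrightarrow> \<exists>C\<in>PP k. a \<in> C"
  using part_PP[of k] unfolding part_def by blast

lemma coarse_Suc: "C \<in> PP k \<Longrightarrow> \<exists>D\<in>PP (Suc k). C \<subseteq> D"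
  by (cases "nt k") (auto simp: st_nt triv_eq intro: mt_coarse[OF part_PP])

lemma coarse: "k \<le> j \<Longrightarrow> C \<in> PP k \<Longrightarrow> \<exists>D\<in>PP j. C \<subseteq> D"
proof (induction j rule: dec_induct)
  case base then show ?case by blast
next
  case (step j) then show ?case using coarse_Suc by (meson order_trans)
qed

definition "Inv k \<longleftrightarrow> (\<forall>e\<in>E. \<not> (\<exists>C\<in>PP k. e \<subseteq> C) \<longrightarrow> load V (Y k) e < c e)"

lemma finET: "finite (ET k)"
proof -
  have "ET k \<subseteq> (\<lambda>e. tau k + (c e - load V (Y k) e) / real (active_rate t (tau k) (PP k) e)) ` E
      \<union> (\<lambda>C. Max (t ` C)) ` PP k" unfolding ET_def event_times_def by blast
  moreover have "finite ((\<lambda>e. tau k + (c e - load V (Y k) e) / real (active_rate t (tau k) (PP k) e)) ` E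
      \<union> (\<lambda>C. Max (t ` C)) ` PP k)" using finE finP by blast
  ultimately show ?thesis using finite_subset by blast
qed

lemma neET: "nt k \<Longrightarrow> ET k \<noteq> {}"
  unfolding nt_def ET_def event_times_def by blast

lemma finC: "C \<in> PP k \<Longrightarrow> finite C"
  using PP_sub finV finite_subset by blast

lemma Max_act: "C \<in> PP k \<Longrightarrow> active t s C \<Longrightarrow> s < Max (t ` C)"
proof -
  assume C: "C \<in> PP k" and a: "active t s C"
  then obtain w where w: "w \<in> C" "s < t w" unfolding active_def by blast
  have "t w \<le> Max (t ` C)" using Max_ge[OF finite_imageI[OF finC[OF C]] imageI[OF w(1)]] .
  then show ?thesis using w by simp
qed

lemma gtET: "Inv k \<Longrightarrow> x \<in> ET k \<Longrightarrow> tau k < x"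
proof -
  assume I: "Inv k" and x: "x \<in> ET k"
  show ?thesis
  proof (cases "x \<in> {Max (t ` C) | C. C \<in> PP k \<and> active t (tau k) C}")
    case True then show ?thesis using Max_act by blast
  next
    case False
    then obtain e where e: "e \<in> E" "\<not> (\<exists>C\<in>PP k. e \<subseteq> C)" "0 < active_rate t (tau k) (PP k) e"
      and xe: "x = tau k + (c e - load V (Y k) e) / real (active_rate t (tau k) (PP k) e)"
      using x unfolding ET_def event_times_def by blast
    have "load V (Y k) e < c e" using I e unfolding Inv_def by blast
    then have "0 < (c e - load V (Y k) e) / real (active_rate t (tau k) (PP k) e)"
      using e(3) by (intro divide_pos_pos) simp_all
    then show ?thesis using xe by linarith
  qed
qed

lemma tauSuc_props:
  assumes "nt k" "Inv k"
  shows "tau (Suc k) \<in> ET k" "\<And>x. x \<in> ET k \<Longrightarrow> tau (Suc k) \<le> x" "tau k < tau (Suc k)"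
  using st_nt(1)[OF assms(1)] finET neET[OF assms(1)] gtET[OF assms(2)] by auto

lemma tauSuc_le_edge:
  assumes "nt k" "Inv k" "e \<in> E" "\<not> (\<exists>C\<in>PP k. e \<subseteq> C)" "0 < active_rate t (tau k) (PP k) e"
  shows "tau (Suc k) \<le> tau k + (c e - load V (Y k) e) / real (active_rate t (tau k) (PP k) e)"
  using tauSuc_props(2)[OF assms(1,2)] assms(3-5) unfolding ET_def event_times_def by blast

lemma tauSuc_le_Max:
  assumes "nt k" "Inv k" "C \<in> PP k" "active t (tau k) C"
  shows "tau (Suc k) \<le> Max (t ` C)"
  using tauSuc_props(2)[OF assms(1,2)] assms(3-4) unfolding ET_def event_times_def by blast

lemma edge_ends: "e \<in> E \<Longrightarrow> \<exists>a b. a \<in> V \<and> b \<in> V \<and> a \<noteq> b \<and> e = {a, b}"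
  using Eok by blast

lemma Inv0: "Inv 0"
  unfolding Inv_def
proof (intro ballI impI)
  fix e assume e: "e \<in> E" and n: "\<not> (\<exists>C\<in>PP 0. e \<subseteq> C)"
  have l: "load V (Y 0) e = 0" by (simp add: load_def Y0)
  obtain a b where ab: "a \<in> V" "b \<in> V" "e = {a, b}" using edge_ends[OF e] by blast
  have "c e \<noteq> 0"
  proof
    assume "c e = 0"
    then have "(a, b) \<in> MR V E c (\<lambda>_. 0) {{v} | v. v \<in> V}"
      unfolding MR_def using e ab by (simp add: load_def)
    from mt_pair[OF this ab(1,2)] obtain D where "D \<in> PP 0" "a \<in> D" "b \<in> D"
      unfolding PP0[symmetric] by blast
    then show False using n ab by blast
  qed
  moreover have "0 \<le> c e" using cpos e by blast
  ultimately show "load V (Y 0) e < c e" using l by linarith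
qed

lemma Inv_Suc: "Inv k \<Longrightarrow> Inv (Suc k)"
proof -
  assume I: "Inv k"
  show "Inv (Suc k)"
  proof (cases "nt k")
    case False show ?thesis using I unfolding Inv_def triv_eq[OF False] by assumption
  next
    case True
    show ?thesis unfolding Inv_def
    proof (intro ballI impI)
      fix e assume e: "e \<in> E" and n: "\<not> (\<exists>C\<in>PP (Suc k). e \<subseteq> C)"
      have n0: "\<not> (\<exists>C\<in>PP k. e \<subseteq> C)"
      proof
        assume "\<exists>C\<in>PP k. e \<subseteq> C"
        then obtain C where C: "C \<in> PP k" "e \<subseteq> C" by blast
        obtain D where D: "D \<in> PP (Suc k)" "C \<subseteq> D" using coarse_Suc[OF C(1)] by blast
        have "e \<subseteq> D" using C(2) D(2) by (rule subset_trans)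
        then show False using n D(1) by blast
      qed
      have I': "\<forall>e\<in>E. \<not> (\<exists>C\<in>PP k. e \<subseteq> C) \<longrightarrow> load V (Y k) e < c e" using I unfolding Inv_def .
      have l0: "load V (Y k) e < c e" by (rule mp[OF bspec[OF I' e] n0])
      define r where "r = real (active_rate t (tau k) (PP k) e)"
      have ls: "load V (Y (Suc k)) e = load V (Y k) e + (tau (Suc k) - tau k) * r"
        unfolding r_def by (rule load_step[OF True])
      have le: "load V (Y (Suc k)) e \<le> c e"
      proof (cases "r = 0")
        case True then show ?thesis using ls l0 by simp
      next
        case False
        then have rp: "0 < active_rate t (tau k) (PP k) e" using r_def by simp
        have "tau (Suc k) \<le> tau k + (c e - load V (Y k) e) / r"
          using tauSuc_le_edge[OF True I e n0 rp] r_def by simp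
        then have "tau (Suc k) - tau k \<le> (c e - load V (Y k) e) / r" by linarith
        moreover have rpos: "0 < r" using rp r_def by simp
        ultimately have "(tau (Suc k) - tau k) * r \<le> c e - load V (Y k) e"
          by (simp add: le_divide_eq)
        then show ?thesis using ls by simp
      qed
      obtain a b where ab: "a \<in> V" "b \<in> V" "e = {a, b}" using edge_ends[OF e] by blast
      have "load V (Y (Suc k)) e \<noteq> c e"
      proof
        assume "load V (Y (Suc k)) e = c e"
        then have "(a, b) \<in> MR V E c (Y (Suc k)) (PP k)"
          unfolding MR_def using e ab by simp
        from mt_pair[OF this ab(1,2)] obtain D where "D \<in> PP (Suc k)" "a \<in> D" "b \<in> D"
          unfolding st_nt(3)[OF True, symmetric] by blast
        then show False using n ab by blast
      qed
      then show "load V (Y (Suc k)) e < c e" using le by simp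
    qed
  qed
qed

lemma Inv: "Inv k"
  by (induction k) (simp_all add: Inv0 Inv_Suc)

lemma tau_le_Suc: "tau k \<le> tau (Suc k)"
  using tauSuc_props(3)[OF _ Inv] triv_eq by (cases "nt k") force+

lemma tau_mono: "k \<le> j \<Longrightarrow> tau k \<le> tau j"
  by (induction j rule: dec_induct) (auto intro: order_trans tau_le_Suc)

lemma tau_nonneg: "0 \<le> tau k"
  using tau_mono[of 0 k] tau0 by simp

end


context smg
begin

definition "Q k = {v \<in> V. tau k < t v}"
definition "mu k = card (PP k) + card (Q k)"

definition "fS k C = (SOME D. D \<in> PP (Suc k) \<and> C \<subseteq> D)"

lemma fS: assumes "C \<in> PP k" shows "fS k C \<in> PP (Suc k) \<and> C \<subseteq> fS k C"
proof -
  have "\<exists>D. D \<in> PP (Suc k) \<and> C \<subseteq> D" using coarse_Suc[OF assms] by blast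
  then show ?thesis unfolding fS_def by (rule someI_ex)
qed

lemma fS_img: "PP (Suc k) = fS k ` PP k"
proof
  show "fS k ` PP k \<subseteq> PP (Suc k)" using fS by blast
next
  show "PP (Suc k) \<subseteq> fS k ` PP k"
  proof
    fix D assume D: "D \<in> PP (Suc k)"
    obtain x where x: "x \<in> D" using PP_ne[OF D] by blast
    have xV: "x \<in> V" using PP_sub[OF D] x by blast
    obtain C where C: "C \<in> PP k" "x \<in> C" using PP_cov[OF xV] by blast
    have f: "fS k C \<in> PP (Suc k)" "C \<subseteq> fS k C" using fS[OF C(1)] by simp_all
    have "x \<in> fS k C" using f(2) C(2) by blast
    then have "fS k C = D" using part_unique[OF part_PP f(1) D _ x] by simp
    then show "D \<in> fS k ` PP k" using C(1) by blast
  qed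
qed

lemma card_PP_le: "card (PP (Suc k)) \<le> card (PP k)"
  unfolding fS_img by (rule card_image_le[OF finP])

lemma card_PP_lt:
  assumes "C1 \<in> PP k" "C2 \<in> PP k" "C1 \<noteq> C2" "a \<in> C1" "b \<in> C2" "D \<in> PP (Suc k)" "a \<in> D" "b \<in> D"
  shows "card (PP (Suc k)) < card (PP k)"
proof -
  have f1: "fS k C1 \<in> PP (Suc k)" "C1 \<subseteq> fS k C1" using fS[OF assms(1)] by simp_all
  have f2: "fS k C2 \<in> PP (Suc k)" "C2 \<subseteq> fS k C2" using fS[OF assms(2)] by simp_all
  have a1: "a \<in> fS k C1" using f1(2) assms(4) by blast
  have b2: "b \<in> fS k C2" using f2(2) assms(5) by blast
  have "fS k C1 = D" using part_unique[OF part_PP f1(1) assms(6) a1 assms(7)] .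
  moreover have "fS k C2 = D" using part_unique[OF part_PP f2(1) assms(6) b2 assms(8)] .
  ultimately have "\<not> inj_on (fS k) (PP k)" using assms(1-3) unfolding inj_on_def by metis
  then have "card (fS k ` PP k) \<noteq> card (PP k)" using inj_on_iff_eq_card[OF finP] by metis
  moreover have "card (fS k ` PP k) \<le> card (PP k)" by (rule card_image_le[OF finP])
  ultimately show ?thesis unfolding fS_img by linarith
qed

lemma finQ: "finite (Q k)"
  unfolding Q_def using finV by simp

lemma Q_sub: "Q (Suc k) \<subseteq> Q k"
  unfolding Q_def using tau_le_Suc[of k] by auto

lemma mu_dec:
  assumes nt: "nt k"
  shows "mu (Suc k) < mu k"
proof -
  have I: "Inv k" by (rule Inv)
  have cq: "card (Q (Suc k)) \<le> card (Q k)" by (rule card_mono[OF finQ Q_sub])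
  have ET: "tau (Suc k) \<in> ET k" using tauSuc_props(1)[OF nt I] .
  show ?thesis
  proof (cases "tau (Suc k) \<in> {Max (t ` C) | C. C \<in> PP k \<and> active t (tau k) C}")
    case True
    then obtain C where C: "C \<in> PP k" "active t (tau k) C" "tau (Suc k) = Max (t ` C)" by blast
    have "t ` C \<noteq> {}" using PP_ne[OF C(1)] by blast
    then have "Max (t ` C) \<in> t ` C" using Max_in finite_imageI[OF finC[OF C(1)]] by blast
    then obtain w where w: "w \<in> C" "t w = Max (t ` C)" by auto
    have wV: "w \<in> V" using PP_sub[OF C(1)] w(1) by blast
    have "tau k < t w" using Max_act[OF C(1) C(2)] w(2) by simp
    then have "w \<in> Q k" using wV unfolding Q_def by blast
    moreover have "w \<notin> Q (Suc k)" using w(2) C(3) unfolding Q_def by simp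
    ultimately have "Q (Suc k) \<subset> Q k" using Q_sub by blast
    then have "card (Q (Suc k)) < card (Q k)" by (rule psubset_card_mono[OF finQ])
    then show ?thesis unfolding mu_def using card_PP_le[of k] by linarith
  next
    case False
    then obtain e where e: "e \<in> E" "\<not> (\<exists>C\<in>PP k. e \<subseteq> C)" "0 < active_rate t (tau k) (PP k) e"
      and xe: "tau (Suc k) = tau k + (c e - load V (Y k) e) / real (active_rate t (tau k) (PP k) e)"
      using ET unfolding ET_def event_times_def by blast
    have "load V (Y (Suc k)) e = load V (Y k) e + (tau (Suc k) - tau k) * real (active_rate t (tau k) (PP k) e)"
      by (rule load_step[OF nt])
    also have "\<dots> = c e" using xe e(3) by simp
    finally have tight: "load V (Y (Suc k)) e = c e" .
    obtain a b where ab: "a \<in> V" "b \<in> V" "e = {a, b}" using edge_ends[OF e(1)] by blast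
    have "(a, b) \<in> MR V E c (Y (Suc k)) (PP k)"
      unfolding MR_def using e(1) ab(3) tight by simp
    from mt_pair[OF this ab(1,2)] obtain D where D: "D \<in> PP (Suc k)" "a \<in> D" "b \<in> D"
      unfolding st_nt(3)[OF nt, symmetric] by blast
    obtain C1 where C1: "C1 \<in> PP k" "a \<in> C1" using PP_cov[OF ab(1)] by blast
    obtain C2 where C2: "C2 \<in> PP k" "b \<in> C2" using PP_cov[OF ab(2)] by blast
    have "C1 \<noteq> C2"
    proof
      assume "C1 = C2"
      then have "e \<subseteq> C1" using C1 C2 ab(3) by simp
      then show False using e(2) C1(1) by blast
    qed
    then have "card (PP (Suc k)) < card (PP k)"
      using card_PP_lt[OF C1(1) C2(1) _ C1(2) C2(2) D] by blast
    then show ?thesis unfolding mu_def using cq by linarith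
  qed
qed

lemma term_ex: "\<exists>N. \<not> nt N"
proof (rule ccontr)
  assume "\<not> (\<exists>N. \<not> nt N)"
  then have all: "nt k" for k by blast
  have "mu k + k \<le> mu 0" for k
  proof (induction k)
    case 0 then show ?case by simp
  next
    case (Suc k) then show ?case using mu_dec[OF all[of k]] by simp
  qed
  from this[of "Suc (mu 0)"] show False by simp
qed

lemma stat:
  assumes "\<not> nt N" "N \<le> j"
  shows "tau j = tau N \<and> PP j = PP N \<and> Y j = Y N \<and> \<not> nt j"
  using assms(2)
proof (induction j rule: dec_induct)
  case base then show ?case using assms(1) by simp
next
  case (step j)
  then have "\<not> nt j" by simp
  then have "tau (Suc j) = tau j" "PP (Suc j) = PP j" "Y (Suc j) = Y j" using triv_eq by simp_all
  moreover have "\<not> nt (Suc j)" using \<open>\<not> nt j\<close> calculation unfolding nt_def by simp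
  ultimately show ?case using step.IH by simp
qed

abbreviation "cmp s a \<equiv> smg_comp V E c t s a"

lemma cmp_iff: "x \<in> cmp s a \<longleftrightarrow> (\<exists>k. tau k \<le> s \<and> (\<exists>C\<in>PP k. a \<in> C \<and> x \<in> C))"
  unfolding smg_comp_def tau_def PP_def by simp

lemma cmp_mono: "s \<le> s' \<Longrightarrow> cmp s a \<subseteq> cmp s' a"
  unfolding cmp_iff by (meson order_trans subsetI cmp_iff)

lemma cmp_sub: "cmp s a \<subseteq> V"
proof
  fix x assume "x \<in> cmp s a"
  then obtain k C where "C \<in> PP k" "x \<in> C" unfolding cmp_iff by blast
  then show "x \<in> V" using PP_sub by blast
qed

lemma cmp_self: assumes "a \<in> V" "0 \<le> s" shows "a \<in> cmp s a"
proof -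
  obtain C where C: "C \<in> PP 0" "a \<in> C" using PP_cov[OF assms(1)] by blast
  have "tau 0 \<le> s" using tau0 assms(2) by simp
  then show ?thesis unfolding cmp_iff using C by blast
qed

lemma cmp_trans:
  assumes "b \<in> cmp s a" "x \<in> cmp s b"
  shows "x \<in> cmp s a"
proof -
  obtain k1 C1 where 1: "tau k1 \<le> s" "C1 \<in> PP k1" "a \<in> C1" "b \<in> C1" using assms(1) unfolding cmp_iff by blast
  obtain k2 C2 where 2: "tau k2 \<le> s" "C2 \<in> PP k2" "b \<in> C2" "x \<in> C2" using assms(2) unfolding cmp_iff by blast
  define m where "m = max k1 k2"
  obtain D1 where D1: "D1 \<in> PP m" "C1 \<subseteq> D1" using coarse[of k1 m C1] 1(2) unfolding m_def by auto
  obtain D2 where D2: "D2 \<in> PP m" "C2 \<subseteq> D2" using coarse[of k2 m C2] 2(2) unfolding m_def by auto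
  have bD: "b \<in> D1" "b \<in> D2" using D1 D2 1 2 by blast+
  have "D1 = D2" using part_unique[OF part_PP D1(1) D2(1) bD] .
  moreover have "tau m \<le> s" unfolding m_def using 1(1) 2(1) by (cases "k1 \<le> k2") (simp_all add: max_def)
  ultimately show ?thesis unfolding cmp_iff using D1 D2 1 2 by blast
qed

lemma cmp_blk:
  assumes m: "tau m \<le> s" "s < tau (Suc m) \<or> \<not> nt m" and C: "C \<in> PP m" "a \<in> C"
  shows "cmp s a = C"
proof
  show "C \<subseteq> cmp s a"
  proof
    fix x assume "x \<in> C"
    then show "x \<in> cmp s a" unfolding cmp_iff using m C by blast
  qed
next
  show "cmp s a \<subseteq> C"
  proof
    fix x assume "x \<in> cmp s a"
    then obtain k C' where k: "tau k \<le> s" "C' \<in> PP k" "a \<in> C'" "x \<in> C'" unfolding cmp_iff by blast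
    show "x \<in> C"
    proof (cases "k \<le> m")
      case True
      obtain D where D: "D \<in> PP m" "C' \<subseteq> D" using coarse[OF True k(2)] by blast
      have "a \<in> D" using D k by blast
      then have "D = C" using part_unique[OF part_PP D(1) C(1) _ C(2)] by simp
      then show ?thesis using D k by blast
    next
      case False
      then have km: "Suc m \<le> k" by simp
      show ?thesis
      proof (cases "s < tau (Suc m)")
        case True
        then show ?thesis using tau_mono[OF km] k(1) by simp
      next
        case False
        then have "\<not> nt m" using m(2) by simp
        then have "PP k = PP m" using stat[of m k] km by simp
        then have C'm: "C' \<in> PP m" using k(2) by simp
        have "C' = C" using part_unique[OF part_PP C'm C(1) k(3) C(2)] .
        then show ?thesis using k by blast
      qed
    qed
  qed
qed

lemma act_blk:
  assumes m: "tau m \<le> s" "s < tau (Suc m) \<or> \<not> nt m" and C: "C \<in> PP m"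
  shows "active t s C \<longleftrightarrow> active t (tau m) C"
proof
  assume "active t s C" then show "active t (tau m) C"
    using m(1) unfolding active_def by force
next
  assume a: "active t (tau m) C"
  then have n: "nt m" using C unfolding nt_def by blast
  then have "s < tau (Suc m)" using m(2) by simp
  also have "tau (Suc m) \<le> Max (t ` C)" by (rule tauSuc_le_Max[OF n Inv C a])
  finally have sM: "s < Max (t ` C)" .
  have "t ` C \<noteq> {}" using PP_ne[OF C] by blast
  then have "Max (t ` C) \<in> t ` C" using Max_in finite_imageI[OF finC[OF C]] by blast
  then obtain w where w: "w \<in> C" "t w = Max (t ` C)" by auto
  have "s < t w" using sM w(2) by simp
  then show "active t s C" using w(1) unfolding active_def by blast
qed

lemma idx_ex:
  assumes "0 \<le> s"
  shows "\<exists>m. tau m \<le> s \<and> (s < tau (Suc m) \<or> \<not> nt m)"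
proof -
  obtain N where N: "\<not> nt N" using term_ex by blast
  define M where "M = {m. m \<le> N \<and> tau m \<le> s}"
  have finM: "finite M" unfolding M_def by simp
  have "0 \<in> M" unfolding M_def using assms tau0 by simp
  then have mM: "Max M \<in> M" using Max_in[OF finM] by blast
  define m where "m = Max M"
  show ?thesis
  proof (cases "m = N")
    case True then show ?thesis using mM N unfolding M_def m_def by auto
  next
    case False
    then have "Suc m \<le> N" using mM unfolding M_def m_def by simp
    have "s < tau (Suc m)"
    proof (rule ccontr)
      assume "\<not> s < tau (Suc m)"
      then have "Suc m \<in> M" using \<open>Suc m \<le> N\<close> unfolding M_def by simp
      then have "Suc m \<le> Max M" using Max_ge[OF finM] by blast
      then show False unfolding m_def by simp
    qed
    then show ?thesis using mM unfolding M_def m_def by blast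
  qed
qed

end


context smg
begin

lemma crosses2: "a \<noteq> b \<Longrightarrow> crosses {a, b} C \<longleftrightarrow> (a \<in> C \<longleftrightarrow> b \<notin> C)"
  by (cases "a \<in> C"; cases "b \<in> C") (simp_all add: crosses_def Int_insert_left)

lemma rate_blk:
  assumes ab: "a \<noteq> b" and Ca: "Ca \<in> PP m" "a \<in> Ca" and Cb: "Cb \<in> PP m" "b \<in> Cb"
  shows "real (active_rate t s (PP m) {a, b}) =
    (if Ca = Cb then 0 else (if active t s Ca then 1 else 0) + (if active t s Cb then 1 else 0))"
proof -
  have ua: "a \<in> C \<longleftrightarrow> C = Ca" if "C \<in> PP m" for C
    using part_unique[OF part_PP that Ca(1) _ Ca(2)] Ca(2) by blast
  have ub: "b \<in> C \<longleftrightarrow> C = Cb" if "C \<in> PP m" for C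
    using part_unique[OF part_PP that Cb(1) _ Cb(2)] Cb(2) by blast
  define A where "A = {C \<in> PP m. active t s C \<and> crosses {a, b} C}"
  have A: "A = {C \<in> PP m. active t s C \<and> (C = Ca \<longleftrightarrow> C \<noteq> Cb)}"
    unfolding A_def using crosses2[OF ab] ua ub by blast
  have r: "active_rate t s (PP m) {a, b} = card A" unfolding A_def active_rate_def by simp
  show ?thesis
  proof (cases "Ca = Cb")
    case True
    then have "A = {}" unfolding A by blast
    then show ?thesis using r True by simp
  next
    case False
    show ?thesis
    proof (cases "active t s Ca"; cases "active t s Cb")
      assume "active t s Ca" "active t s Cb"
      then have "A = {Ca, Cb}" unfolding A using False Ca(1) Cb(1) by blast
      then show ?thesis using r False \<open>active t s Ca\<close> \<open>active t s Cb\<close> by simp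
    next
      assume "active t s Ca" "\<not> active t s Cb"
      then have "A = {Ca}" unfolding A using False Ca(1) Cb(1) by blast
      then show ?thesis using r False \<open>active t s Ca\<close> \<open>\<not> active t s Cb\<close> by simp
    next
      assume "\<not> active t s Ca" "active t s Cb"
      then have "A = {Cb}" unfolding A using False Ca(1) Cb(1) by blast
      then show ?thesis using r False \<open>\<not> active t s Ca\<close> \<open>active t s Cb\<close> by simp
    next
      assume "\<not> active t s Ca" "\<not> active t s Cb"
      then have "A = {}" unfolding A using False Ca(1) Cb(1) by blast
      then show ?thesis using r False \<open>\<not> active t s Ca\<close> \<open>\<not> active t s Cb\<close> by simp
    qed
  qed
qed

definition "G a b s = (if b \<in> cmp s a then 0 else
   (if active t s (cmp s a) then 1 else 0) + (if active t s (cmp s b) then 1 else 0) :: real)"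

lemma G_blk:
  assumes ab: "a \<in> V" "b \<in> V" "a \<noteq> b"
    and m: "tau m \<le> s" "s < tau (Suc m) \<or> \<not> nt m"
  shows "G a b s = real (active_rate t (tau m) (PP m) {a, b})"
proof -
  obtain Ca where Ca: "Ca \<in> PP m" "a \<in> Ca" using PP_cov[OF ab(1)] by blast
  obtain Cb where Cb: "Cb \<in> PP m" "b \<in> Cb" using PP_cov[OF ab(2)] by blast
  have ca: "cmp s a = Ca" by (rule cmp_blk[OF m Ca])
  have cb: "cmp s b = Cb" by (rule cmp_blk[OF m Cb])
  have bin: "b \<in> Ca \<longleftrightarrow> Ca = Cb" using part_unique[OF part_PP Ca(1) Cb(1) _ Cb(2)] Cb(2) by blast
  have aa: "active t s Ca \<longleftrightarrow> active t (tau m) Ca" by (rule act_blk[OF m Ca(1)])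
  have ab': "active t s Cb \<longleftrightarrow> active t (tau m) Cb" by (rule act_blk[OF m Cb(1)])
  show ?thesis unfolding rate_blk[OF ab(3) Ca Cb] G_def ca cb using bin aa ab' by simp
qed

lemma K:
  assumes ab: "a \<in> V" "b \<in> V" "a \<noteq> b"
    and m: "tau m \<le> T" "T \<le> tau (Suc m) \<or> \<not> nt m"
  shows "(G a b has_integral ((T - tau m) * real (active_rate t (tau m) (PP m) {a, b}))) {tau m..T}"
proof -
  define r where "r = real (active_rate t (tau m) (PP m) {a, b})"
  have c2: "((\<lambda>x. r) has_integral ((T - tau m) * r)) {tau m..T}"
    using has_integral_const_real[of r "tau m" T] m(1) by simp
  show ?thesis unfolding r_def[symmetric]
  proof (rule has_integral_spike_finite[OF _ _ c2])
    show "finite {T}" by simp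
  next
    fix x assume x: "x \<in> {tau m..T} - {T}"
    then have x1: "tau m \<le> x" and x2: "x < T" by auto
    have "x < tau (Suc m) \<or> \<not> nt m" using m(2) x2 by auto
    then show "G a b x = r" unfolding r_def by (rule G_blk[OF ab x1])
  qed
qed

lemma J:
  assumes ab: "a \<in> V" "b \<in> V" "a \<noteq> b"
  shows "(G a b has_integral load V (Y m) {a, b}) {0..tau m}"
proof (induction m)
  case 0
  have c2: "((\<lambda>x. 0::real) has_integral 0) {0..0}"
    using has_integral_const_real[of "0::real" 0 0] by simp
  have l: "load V (Y 0) {a, b} = 0" by (simp add: load_def Y0)
  have "(G a b has_integral 0) {0..0}"
    by (rule has_integral_spike_finite[OF _ _ c2, of "{0}"]) auto
  then show ?case using l tau0 by simp
next
  case (Suc m)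
  show ?case
  proof (cases "nt m")
    case False
    then show ?thesis using Suc.IH triv_eq[OF False] by simp
  next
    case True
    have k: "(G a b has_integral ((tau (Suc m) - tau m) * real (active_rate t (tau m) (PP m) {a, b}))) {tau m..tau (Suc m)}"
      by (rule K[OF ab tau_le_Suc]) simp
    have "(G a b has_integral (load V (Y m) {a, b} + (tau (Suc m) - tau m) * real (active_rate t (tau m) (PP m) {a, b}))) {0..tau (Suc m)}"
      by (rule has_integral_combine[OF tau_nonneg tau_le_Suc Suc.IH k])
    then show ?thesis using load_step[OF True] by simp
  qed
qed

lemma IT:
  assumes ab: "a \<in> V" "b \<in> V" "a \<noteq> b" and T: "0 \<le> T"
  shows "\<exists>m. tau m \<le> T \<and> (T < tau (Suc m) \<or> \<not> nt m) \<and>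
     (G a b has_integral (load V (Y m) {a, b} + (T - tau m) * real (active_rate t (tau m) (PP m) {a, b}))) {0..T}"
proof -
  obtain m where m: "tau m \<le> T" "T < tau (Suc m) \<or> \<not> nt m" using idx_ex[OF T] by blast
  have m2: "T \<le> tau (Suc m) \<or> \<not> nt m" using m(2) by auto
  have "(G a b has_integral (load V (Y m) {a, b} + (T - tau m) * real (active_rate t (tau m) (PP m) {a, b}))) {0..T}"
    by (rule has_integral_combine[OF tau_nonneg m(1) J[OF ab] K[OF ab m(1) m2]])
  then show ?thesis using m by blast
qed

end


context smg
begin
lemma cmp_sym: "b \<in> cmp s a \<Longrightarrow> a \<in> cmp s b"
  unfolding cmp_iff by blast
end

locale smg2 = R1: smg V E c t + R2: smg V E c t'
  for V :: "'a set" and E :: "'a set set" and c :: "'a set \<Rightarrow> real" and t t' :: "'a \<Rightarrow> real" +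
  assumes tle: "\<forall>w\<in>V. t w \<le> t' w"
begin

lemma act_mono:
  assumes "C \<subseteq> C'" "C \<subseteq> V" "active t s C" shows "active t' s C'"
proof -
  obtain w where w: "w \<in> C" "s < t w" using assms(3) unfolding active_def by blast
  have "t w \<le> t' w" using tle w(1) assms(2) by blast
  then show ?thesis using w assms(1) unfolding active_def by force
qed

lemma G_le:
  assumes "smg_comp V E c t s a \<subseteq> smg_comp V E c t' s a" "smg_comp V E c t s b \<subseteq> smg_comp V E c t' s b"
    and nb: "b \<notin> smg_comp V E c t' s a"
  shows "R1.G a b s \<le> R2.G a b s"
proof -
  have nb1: "b \<notin> smg_comp V E c t s a" using nb assms(1) by blast
  have i1: "active t s (smg_comp V E c t s a) \<Longrightarrow> active t' s (smg_comp V E c t' s a)"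
    using act_mono[OF assms(1) R1.cmp_sub] .
  have i2: "active t s (smg_comp V E c t s b) \<Longrightarrow> active t' s (smg_comp V E c t' s b)"
    using act_mono[OF assms(2) R1.cmp_sub] .
  show ?thesis unfolding R1.G_def R2.G_def using nb nb1 i1 i2 by simp
qed

lemma edge:
  assumes ab: "a \<in> V" "b \<in> V" "a \<noteq> b" "{a, b} \<in> E"
    and tight: "load V (R1.Y k) {a, b} = c {a, b}"
    and pre: "\<forall>s<R1.tau k. \<forall>x\<in>V. smg_comp V E c t s x \<subseteq> smg_comp V E c t' s x"
  shows "b \<in> smg_comp V E c t' (R1.tau k) a"
proof (rule ccontr)
  define T where "T = R1.tau k"
  assume "b \<notin> smg_comp V E c t' (R1.tau k) a"
  then have nb: "b \<notin> smg_comp V E c t' T a" unfolding T_def .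
  have T0: "0 \<le> T" unfolding T_def by (rule R1.tau_nonneg)
  have J1: "(R1.G a b has_integral c {a, b}) {0..T}"
    using R1.J[OF ab(1-3), of k] tight unfolding T_def by simp
  obtain m where m: "R2.tau m \<le> T" "T < R2.tau (Suc m) \<or> \<not> R2.nt m"
    and int: "(R2.G a b has_integral (load V (R2.Y m) {a, b} + (T - R2.tau m) * real (active_rate t' (R2.tau m) (R2.PP m) {a, b}))) {0..T}"
    using R2.IT[OF ab(1-3) T0] by blast
  define X where "X = load V (R2.Y m) {a, b} + (T - R2.tau m) * real (active_rate t' (R2.tau m) (R2.PP m) {a, b})"
  have ne: "\<not> (\<exists>C\<in>R2.PP m. {a, b} \<subseteq> C)"
  proof
    assume "\<exists>C\<in>R2.PP m. {a, b} \<subseteq> C"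
    then obtain C where "C \<in> R2.PP m" "a \<in> C" "b \<in> C" by blast
    then have "b \<in> smg_comp V E c t' T a" unfolding R2.cmp_iff using m(1) by blast
    then show False using nb by simp
  qed
  have l2: "load V (R2.Y m) {a, b} < c {a, b}"
    using R2.Inv[of m] ab(4) ne unfolding R2.Inv_def by blast
  have XC: "X < c {a, b}"
  proof (cases "active_rate t' (R2.tau m) (R2.PP m) {a, b} = 0")
    case True then show ?thesis unfolding X_def using l2 by simp
  next
    case False
    then have rp: "0 < active_rate t' (R2.tau m) (R2.PP m) {a, b}" by simp
    then have "{C \<in> R2.PP m. active t' (R2.tau m) C \<and> crosses {a, b} C} \<noteq> {}"
      unfolding active_rate_def by (metis card.empty less_irrefl)
    then have nt: "R2.nt m" unfolding R2.nt_def by blast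
    then have Tl: "T < R2.tau (Suc m)" using m(2) by simp
    have "R2.tau (Suc m) \<le> R2.tau m + (c {a, b} - load V (R2.Y m) {a, b}) / real (active_rate t' (R2.tau m) (R2.PP m) {a, b})"
      by (rule R2.tauSuc_le_edge[OF nt R2.Inv ab(4) ne rp])
    then have "T - R2.tau m < (c {a, b} - load V (R2.Y m) {a, b}) / real (active_rate t' (R2.tau m) (R2.PP m) {a, b})"
      using Tl by linarith
    then have "(T - R2.tau m) * real (active_rate t' (R2.tau m) (R2.PP m) {a, b}) < c {a, b} - load V (R2.Y m) {a, b}"
      using rp by (simp add: less_divide_eq)
    then show ?thesis unfolding X_def by linarith
  qed
  define H where "H s = (if s = T then R1.G a b s else R2.G a b s)" for s
  have intH: "(H has_integral X) {0..T}"
  proof (rule has_integral_spike_finite[OF _ _ int[folded X_def]])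
    show "finite {T}" by simp
  next
    fix x assume "x \<in> {0..T} - {T}" then show "H x = R2.G a b x" unfolding H_def by simp
  qed
  have le: "R1.G a b s \<le> H s" if s: "s \<in> {0..T}" for s
  proof (cases "s = T")
    case True then show ?thesis unfolding H_def by simp
  next
    case False
    then have sT: "s < T" using s by simp
    have p1: "smg_comp V E c t s a \<subseteq> smg_comp V E c t' s a" using pre sT ab(1) unfolding T_def by blast
    have p2: "smg_comp V E c t s b \<subseteq> smg_comp V E c t' s b" using pre sT ab(2) unfolding T_def by blast
    have "smg_comp V E c t' s a \<subseteq> smg_comp V E c t' T a" using R2.cmp_mono sT by simp
    then have "b \<notin> smg_comp V E c t' s a" using nb by blast
    then show ?thesis unfolding H_def using G_le[OF p1 p2] False by simp
  qed
  have "c {a, b} \<le> X" by (rule has_integral_le[OF J1 intH le])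
  then show False using XC by simp
qed

lemma claim: "\<forall>C\<in>R1.PP k. \<forall>a\<in>C. \<forall>x\<in>C. x \<in> smg_comp V E c t' (R1.tau k) a"
proof (induction k rule: less_induct)
  case (less k)
  show ?case
  proof (cases k)
    case 0
    show ?thesis
    proof (intro ballI)
      fix C a x assume C: "C \<in> R1.PP k" "a \<in> C" "x \<in> C"
      have "C \<in> R2.PP 0" using C(1) unfolding 0 R1.PP0 R2.PP0 .
      then show "x \<in> smg_comp V E c t' (R1.tau k) a"
        unfolding R2.cmp_iff 0 R1.tau0 using C(2,3) R2.tau0 by (intro exI[of _ 0]) auto
    qed
  next
    case (Suc j)
    have jk: "j < k" using Suc by simp
    have IHj: "\<forall>C\<in>R1.PP j. \<forall>a\<in>C. \<forall>x\<in>C. x \<in> smg_comp V E c t' (R1.tau j) a" using less jk by blast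
    have pre: "\<forall>s<R1.tau (Suc j). \<forall>x\<in>V. smg_comp V E c t s x \<subseteq> smg_comp V E c t' s x"
    proof (intro allI impI ballI subsetI)
      fix s x y assume s: "s < R1.tau (Suc j)" and "x \<in> V" and y: "y \<in> smg_comp V E c t s x"
      obtain i C where i: "R1.tau i \<le> s" "C \<in> R1.PP i" "x \<in> C" "y \<in> C" using y unfolding R1.cmp_iff by blast
      have "i < k"
      proof (rule ccontr)
        assume "\<not> i < k"
        then have "Suc j \<le> i" using Suc by simp
        then have "R1.tau (Suc j) \<le> R1.tau i" by (rule R1.tau_mono)
        then show False using i(1) s by simp
      qed
      then have "y \<in> smg_comp V E c t' (R1.tau i) x" using less i(2-4) by blast
      moreover have "smg_comp V E c t' (R1.tau i) x \<subseteq> smg_comp V E c t' s x" using R2.cmp_mono i(1) by simp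
      ultimately show "y \<in> smg_comp V E c t' s x" by blast
    qed
    show ?thesis
    proof (cases "R1.nt j")
      case False
      show ?thesis unfolding Suc R1.triv_eq[OF False] by (rule IHj)
    next
      case True
      define T where "T = R1.tau (Suc j)"
      have T0: "0 \<le> T" unfolding T_def by (rule R1.tau_nonneg)
      define RR where "RR = MR V E c (R1.Y (Suc j)) (R1.PP j)"
      have key: "w \<in> smg_comp V E c t' T a0" if "(a0, w) \<in> RR\<^sup>*" "a0 \<in> V" for a0 w
        using that(1)
      proof (induction rule: rtrancl_induct)
        case base then show ?case by (rule R2.cmp_self[OF that(2) T0])
      next
        case (step y z)
        have "z \<in> smg_comp V E c t' T y"
        proof -
          have "(\<exists>C\<in>R1.PP j. y \<in> C \<and> z \<in> C) \<or> ({y, z} \<in> E \<and> load V (R1.Y (Suc j)) {y, z} = c {y, z})"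
            using step(2) unfolding RR_def MR_def by simp
          then show ?thesis
          proof
            assume "\<exists>C\<in>R1.PP j. y \<in> C \<and> z \<in> C"
            then obtain C where C: "C \<in> R1.PP j" "y \<in> C" "z \<in> C" by blast
            have "z \<in> smg_comp V E c t' (R1.tau j) y" using IHj C by blast
            moreover have "smg_comp V E c t' (R1.tau j) y \<subseteq> smg_comp V E c t' T y"
              using R2.cmp_mono R1.tau_le_Suc unfolding T_def by blast
            ultimately show ?thesis by blast
          next
            assume ed: "{y, z} \<in> E \<and> load V (R1.Y (Suc j)) {y, z} = c {y, z}"
            obtain a' b' where "a' \<in> V" "b' \<in> V" "{y, z} = {a', b'}" using R1.edge_ends[of "{y, z}"] ed by blast
            then have yz: "y \<in> V" "z \<in> V" by (metis insertI1 insert_commute insert_iff singletonD)+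
            show ?thesis
            proof (cases "y = z")
              case True then show ?thesis using R2.cmp_self[OF yz(1) T0] by simp
            next
              case False
              show ?thesis unfolding T_def by (rule edge[OF yz False conjunct1[OF ed] conjunct2[OF ed] pre])
            qed
          qed
        qed
        then show ?case using R2.cmp_trans step(3) by blast
      qed
      show ?thesis
      proof (intro ballI)
        fix C a x assume C: "C \<in> R1.PP k" "a \<in> C" "x \<in> C"
        have "C \<in> merge_tight V E c (R1.Y (Suc j)) (R1.PP j)" using C(1) R1.st_nt(3)[OF True] Suc by simp
        then obtain a0 where a0: "a0 \<in> V" "C = {w \<in> V. (a0, w) \<in> RR\<^sup>*}" unfolding mt_eq RR_def by blast
        have "a \<in> smg_comp V E c t' T a0" using key[OF _ a0(1)] C(2) a0(2) by blast
        then have 1: "a0 \<in> smg_comp V E c t' T a" by (rule R2.cmp_sym)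
        have 2: "x \<in> smg_comp V E c t' T a0" using key[OF _ a0(1)] C(3) a0(2) by blast
        have "x \<in> smg_comp V E c t' T a" by (rule R2.cmp_trans[OF 1 2])
        then show "x \<in> smg_comp V E c t' (R1.tau k) a" unfolding T_def Suc .
      qed
    qed
  qed
qed

lemma REF: "smg_comp V E c t s a \<subseteq> smg_comp V E c t' s a"
proof
  fix x assume "x \<in> smg_comp V E c t s a"
  then obtain k C where k: "R1.tau k \<le> s" "C \<in> R1.PP k" "a \<in> C" "x \<in> C" unfolding R1.cmp_iff by blast
  then have "x \<in> smg_comp V E c t' (R1.tau k) a" using claim by blast
  moreover have "smg_comp V E c t' (R1.tau k) a \<subseteq> smg_comp V E c t' s a" using R2.cmp_mono k(1) by simp
  ultimately show "x \<in> smg_comp V E c t' s a" by blast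
qed

end

theorem mainTheorem5:
  fixes V :: "'a set" and E :: "'a set set" and c :: "'a set \<Rightarrow> real"
    and t t' :: "'a \<Rightarrow> real" and u v :: 'a
  assumes "finite V"
    and "\<forall>e\<in>E. \<exists>a b. a \<in> V \<and> b \<in> V \<and> a \<noteq> b \<and> e = {a, b}"
    and "\<forall>e\<in>E. 0 \<le> c e"
    and "\<forall>w\<in>V. 0 \<le> t w" and "\<forall>w\<in>V. 0 \<le> t' w"
    and "\<forall>w\<in>V. t w \<le> t' w"
    and "u \<in> V" and "v \<in> V"
    and "actively_connected V E c t u v"
  shows "actively_connected V E c t' u v"
proof -
  interpret I: smg2 V E c t t'
    by (unfold_locales) (use assms(1-3,6) in auto)
  obtain \<tau> where tau: "0 \<le> \<tau>" "v \<in> smg_comp V E c t \<tau> u"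
    and act: "\<forall>\<tau>'. 0 \<le> \<tau>' \<and> \<tau>' < \<tau> \<longrightarrow>
            active t \<tau>' (smg_comp V E c t \<tau>' u) \<and> active t \<tau>' (smg_comp V E c t \<tau>' v)"
    using assms(9) unfolding actively_connected_def by blast
  have "v \<in> smg_comp V E c t' \<tau> u" using I.REF tau(2) by blast
  moreover have "active t' \<tau>' (smg_comp V E c t' \<tau>' u) \<and> active t' \<tau>' (smg_comp V E c t' \<tau>' v)"
    if "0 \<le> \<tau>' \<and> \<tau>' < \<tau>" for \<tau>'
  proof -
    have a: "active t \<tau>' (smg_comp V E c t \<tau>' u)" "active t \<tau>' (smg_comp V E c t \<tau>' v)" using act that by blast+
    show ?thesis using I.act_mono[OF I.REF I.R1.cmp_sub a(1)] I.act_mono[OF I.REF I.R1.cmp_sub a(2)] by blast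
  qed
  ultimately show ?thesis unfolding actively_connected_def using tau(1) by blast
qed


end
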